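(* Fix a positive integer $l$ and $\rho\in\mathcal C$. For every $n\ge1$ let $\pi_n$ be a random permutation in $S_n$ with law $\mathbb P_n$, such that \[ \lim_{n\to\infty}\sup_{\mathbf p,\mathbf q\in\mathcal S(n,l)}\left|\frac{n^l\,\mathbb P_n(\pi_n(\mathbf p)=\mathbf q)}{\prod_{a=1}^l\rho\left(\frac{p_a}{n},\frac{q_a}{n}\right)}-1\right|=0. \] Suppose $\mathbf p_n\in\mathcal S(n,l)$ satisfies $\frac1n\mathbf p_n\to\mathbf x=(x_1,\dots,x_l)\in[0,1]^l$. Then $\frac1n\pi_n(\mathbf p_n)$ converges in distribution to $(Y(x_1),\dots,Y(x_l))$, where $Y(x_1),\dots,Y(x_l)$ are mutually independent and $Y(x_a)$ has density $\rho(x_a,\cdot)$ on $[0,1]$.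
   Context: $[n]=\{1,\dots,n\}$. $\mathcal S(n,l)=\{\mathbf p=(p_1,\dots,p_l)\in[n]^l: p_a\ne p_b \text{ for } a\ne b\}$; for a permutation $\pi_n$, $\pi_n(\mathbf p)=(\pi_n(p_1),\dots,\pi_n(p_l))$. $\mathcal C$ is the set of strictly positive continuous functions $\rho$ on $[0,1]^2$ with $\int_0^1\rho(x,y)\,dx=\int_0^1\rho(x,y)\,dy=1$ for all $x,y$. *)

theory Defs
  imports "HOL-Probability.Probability" "HOL-Combinatorics.Permutations"
begin

definition class_C :: "(real \<Rightarrow> real \<Rightarrow> real) \<Rightarrow> bool" where
  "class_C \<rho> \<longleftrightarrow>
     continuous_on ({0..1} \<times> {0..1}) (\<lambda>(x, y). \<rho> x y) \<and>
     (\<forall>x\<in>{0..1}. \<forall>y\<in>{0..1}. \<rho> x y > 0) \<and>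
     (\<forall>y\<in>{0..1}. integral {0..1} (\<lambda>x. \<rho> x y) = 1) \<and>
     (\<forall>x\<in>{0..1}. integral {0..1} (\<lambda>y. \<rho> x y) = 1)"

text \<open>S(n,l): injective l-tuples with entries in [n]; the index set [l] is the
  finite type 'l.\<close>
definition tuples_S :: "nat \<Rightarrow> ('l::finite \<Rightarrow> nat) set" where
  "tuples_S n = {p. inj p \<and> range p \<subseteq> {1..n}}"

definition conv_in_distr :: "(nat \<Rightarrow> (real^'l::finite) measure) \<Rightarrow> (real^'l) measure \<Rightarrow> bool" where
  "conv_in_distr M L \<longleftrightarrow>
     (\<forall>f :: real^'l \<Rightarrow> real. continuous_on UNIV f \<and> bounded (range f) \<longrightarrow>
        (\<lambda>n. integral\<^sup>L (M n) f) \<longlonglongrightarrow> integral\<^sup>L L f)"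

text \<open>Law of (Y(x_1),...,Y(x_l)) with independent coordinates, Y(x_a) having
  density rho(x_a, .) on [0,1]: product density on real^'l.\<close>
definition limit_law :: "(real \<Rightarrow> real \<Rightarrow> real) \<Rightarrow> real^'l::finite \<Rightarrow> (real^'l) measure" where
  "limit_law \<rho> x = density lborel
     (\<lambda>y. ennreal (\<Prod>a\<in>UNIV. indicator {0..1} (y $ a) * \<rho> (x $ a) (y $ a)))"

end

theory Submission
  imports Defs
begin

definition cell :: "nat \<Rightarrow> ('l::finite \<Rightarrow> nat) \<Rightarrow> (real^'l) set" where
  "cell n q = {y. \<forall>a. (real (q a) - 1) / real n < y$a \<and> y$a \<le> real (q a) / real n}"

lemma cell_sets[measurable]: "cell n q \<in> sets lborel"
  unfolding cell_def by measurable

lemma cell_unique: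
  assumes "n \<ge> 1" "y \<in> cell n q"
  shows "q a = nat \<lceil>real n * y$a\<rceil>"
proof -
  have n: "real n > 0" using assms by simp
  from assms(2) have "(real (q a) - 1) / real n < y$a" "y$a \<le> real (q a) / real n"
    by (auto simp: cell_def)
  hence "real (q a) - 1 < real n * y$a" "real n * y$a \<le> real (q a)"
    using n by (auto simp: field_simps)
  hence "\<lceil>real n * y$a\<rceil> = int (q a)"
    by (intro ceiling_unique) auto
  thus ?thesis by simp
qed

lemma cell_measure:
  fixes q :: "'l::finite \<Rightarrow> nat"
  assumes "n \<ge> 1"
  shows "measure lborel (cell n q) = 1 / real n ^ CARD('l)"
proof -
  define u :: "real^'l" where "u = (\<chi> a. (real (q a) - 1) / real n)"
  define v :: "real^'l" where "v = (\<chi> a. real (q a) / real n)"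
  have n: "real n > 0" using assms by simp
  have uv: "\<And>a. u$a \<le> v$a" using n by (auto simp: u_def v_def divide_right_mono)
  have sub1: "box u v \<subseteq> cell n q" by (auto simp: cell_def mem_box_cart u_def v_def less_imp_le)
  have sub2: "cell n q \<subseteq> cbox u v" by (auto simp: cell_def mem_box_cart u_def v_def less_imp_le)
  have eq: "emeasure lborel (box u v) = emeasure lborel (cbox u v)"
    by (simp add: emeasure_lborel_box_eq emeasure_lborel_cbox_eq)
  have "emeasure lborel (box u v) \<le> emeasure lborel (cell n q)"
    by (intro emeasure_mono sub1) (use cell_sets in simp)
  moreover have "emeasure lborel (cell n q) \<le> emeasure lborel (cbox u v)"
    by (intro emeasure_mono sub2) simp
  ultimately have "emeasure lborel (cell n q) = emeasure lborel (cbox u v)"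
    using eq by (metis antisym)
  hence "measure lborel (cell n q) = measure lborel (cbox u v)"
    by (simp add: measure_def)
  also have "\<dots> = (\<Prod>a\<in>UNIV. v$a - u$a)"
    using uv by (intro content_cbox_cart) (metis empty_iff mem_box_cart(2) order_refl)
  also have "\<dots> = (\<Prod>a\<in>(UNIV::'l set). 1 / real n)"
    by (intro prod.cong) (auto simp: u_def v_def diff_divide_distrib)
  also have "\<dots> = 1 / real n ^ CARD('l)" by (simp add: power_one_over)
  finally show ?thesis .
qed

lemma cell_sub:
  assumes "n \<ge> 1" "\<forall>a. q a \<in> {1..n}"
  shows "cell n q \<subseteq> cbox 0 1"
proof
  fix y assume y: "y \<in> cell n q"
  have n: "real n > 0" using assms by simp
  show "y \<in> cbox 0 1"
    unfolding mem_box_cart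
  proof
    fix a
    from y have "(real (q a) - 1) / real n < y$a" "y$a \<le> real (q a) / real n"
      by (auto simp: cell_def)
    moreover have "real (q a) \<ge> 1" "real (q a) \<le> real n" using assms(2) by auto
    moreover have "0 \<le> (real (q a) - 1) / real n" using n \<open>real (q a) \<ge> 1\<close> by simp
    moreover have "real (q a) / real n \<le> 1" using n \<open>real (q a) \<le> real n\<close> by simp
    ultimately have "0 \<le> y$a" "y$a \<le> 1" by linarith+
    thus "0 $ a \<le> y $ a \<and> y $ a \<le> 1 $ a" by simp
  qed
qed

lemma diag_negligible:
  fixes a b :: "'l::finite"
  assumes "a \<noteq> b"
  shows "negligible {y :: real^'l. y$a = y$b}"
proof -
  have ne: "axis a (1::real) - axis b 1 \<noteq> 0"
  proof
    assume "axis a (1::real) - axis b 1 = 0"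
    hence "(axis a (1::real) - axis b 1) $ a = 0" by simp
    thus False using assms by (simp add: axis_def)
  qed
  have "{y :: real^'l. y$a = y$b} = {y. (axis a 1 - axis b 1) \<bullet> y = 0}"
    by (auto simp: inner_diff_left inner_axis')
  thus ?thesis using negligible_hyperplane[of "axis a 1 - axis b 1" 0] ne by simp
qed

lemma bad_AE:
  "AE y in lborel. y \<notin> (cbox (0::real^'l::finite) 1 - box 0 1) \<union> (\<Union>a. \<Union>b\<in>-{a}. {y. y$a = y$b})"
proof -
  have "negligible ((cbox (0::real^'l::finite) 1 - box 0 1) \<union> (\<Union>a. \<Union>b\<in>-{a}. {y. y$a = y$b}))"
    by (intro negligible_Un negligible_frontier_interval negligible_Union finite_imageI)
       (auto intro: diag_negligible)
  hence "AE y in lebesgue. y \<notin> (cbox (0::real^'l::finite) 1 - box 0 1) \<union> (\<Union>a. \<Union>b\<in>-{a}. {y. y$a = y$b})"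
    by (intro AE_not_in) (simp add: negligible_iff_null_sets)
  thus ?thesis by (simp add: AE_completion_iff)
qed

lemma cell_sum:
  fixes G :: "('l::finite \<Rightarrow> nat) \<Rightarrow> real"
  assumes "n \<ge> 1" "finite S" "q \<in> S" "y \<in> cell n q"
  shows "(\<Sum>q'\<in>S. G q' * indicator (cell n q') y) = G q"
proof -
  have "\<And>q'. q' \<in> S \<Longrightarrow> G q' * indicator (cell n q') y = (if q' = q then G q else 0)"
  proof -
    fix q' assume "q' \<in> S"
    show "G q' * indicator (cell n q') y = (if q' = q then G q else 0)"
    proof (cases "y \<in> cell n q'")
      case True
      hence "q' = q" using cell_unique[OF assms(1) True] cell_unique[OF assms(1) assms(4)]
        by (intro ext) metis
      thus ?thesis using True by simp
    next
      case False
      hence "q' \<noteq> q" using assms(4) by auto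
      thus ?thesis using False by simp
    qed
  qed
  hence "(\<Sum>q'\<in>S. G q' * indicator (cell n q') y) = (\<Sum>q'\<in>S. if q' = q then G q else 0)"
    by (intro sum.cong) auto
  also have "\<dots> = G q" using assms(2,3) by simp
  finally show ?thesis .
qed

lemma cell_sum0:
  fixes G :: "('l::finite \<Rightarrow> nat) \<Rightarrow> real"
  assumes "\<forall>q\<in>S. y \<notin> cell n q"
  shows "(\<Sum>q'\<in>S. G q' * indicator (cell n q') y) = 0"
  using assms by (intro sum.neutral) auto

theorem corollary1p2:
  fixes \<rho> :: "real \<Rightarrow> real \<Rightarrow> real"
    and P :: "nat \<Rightarrow> (nat \<Rightarrow> nat) pmf"
    and pn :: "nat \<Rightarrow> ('l::finite \<Rightarrow> nat)"
    and x :: "real^'l"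
  assumes rho: "class_C \<rho>"
    and perm: "\<And>n. n \<ge> 1 \<Longrightarrow> set_pmf (P n) \<subseteq> {\<pi>. \<pi> permutes {1..n}}"
    and unif: "(\<lambda>n. SUP pq \<in> (tuples_S n :: ('l \<Rightarrow> nat) set) \<times> tuples_S n.
                 \<bar>real n ^ CARD('l) * measure_pmf.prob (P n) {\<pi>. \<forall>a. \<pi> (fst pq a) = snd pq a}
                   / (\<Prod>a\<in>UNIV. \<rho> (real (fst pq a) / real n) (real (snd pq a) / real n)) - 1\<bar>)
               \<longlonglongrightarrow> 0"
    and pn_S: "eventually (\<lambda>n. pn n \<in> tuples_S n) sequentially"
    and x_box: "\<forall>a. x $ a \<in> {0..1}"
    and pn_lim: "(\<lambda>n. \<chi> a. real (pn n a) / real n) \<longlonglongrightarrow> x"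
  shows "conv_in_distr
           (\<lambda>n. measure_pmf (map_pmf (\<lambda>\<pi>. \<chi> a. real (\<pi> (pn n a)) / real n) (P n)))
           (limit_law \<rho> x)"
  unfolding conv_in_distr_def
proof (intro allI impI)
  fix f :: "real^'l \<Rightarrow> real"
  assume f: "continuous_on UNIV f \<and> bounded (range f)"
  have fcont: "continuous_on UNIV f" using f by simp
  obtain B where B: "\<And>y. \<bar>f y\<bar> \<le> B" using f by (auto simp: bounded_iff)
  have B0: "0 \<le> B" using B[of 0] by linarith
  have rcont: "continuous_on ({0..1} \<times> {0..1}) (\<lambda>(u, v). \<rho> u v)"
   and rpos: "\<And>u v. u \<in> {0..1} \<Longrightarrow> v \<in> {0..1} \<Longrightarrow> \<rho> u v > 0"
    using rho by (auto simp: class_C_def)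
  obtain M where M: "\<And>u v. u \<in> {0..1} \<Longrightarrow> v \<in> {0..1} \<Longrightarrow> \<rho> u v \<le> M"
  proof -
    have "compact ((\<lambda>(u, v). \<rho> u v) ` ({0..1::real} \<times> {0..1::real}))"
      by (intro compact_continuous_image rcont compact_Times) auto
    hence "bounded ((\<lambda>(u, v). \<rho> u v) ` ({0..1::real} \<times> {0..1::real}))"
      by (rule compact_imp_bounded)
    then obtain M where "\<forall>z\<in>(\<lambda>(u, v). \<rho> u v) ` ({0..1::real} \<times> {0..1::real}). norm z \<le> M"
      unfolding bounded_iff by blast
    hence M': "\<And>u v. u \<in> {0..1::real} \<Longrightarrow> v \<in> {0..1::real} \<Longrightarrow> \<bar>\<rho> u v\<bar> \<le> M"
      by (metis (no_types, lifting) SigmaI case_prod_conv image_eqI real_norm_def)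
    show ?thesis by (rule that[of M]) (use M' in \<open>force\<close>)
  qed
  have M0: "0 \<le> M" using M[of 0 0] rpos[of 0 0] by simp

  define T where "T n pq = \<bar>real n ^ CARD('l) * measure_pmf.prob (P n) {\<pi>. \<forall>a. \<pi> (fst pq a) = snd pq a}
                   / (\<Prod>a\<in>UNIV. \<rho> (real (fst pq a) / real n) (real (snd pq a) / real n)) - 1\<bar>"
    for n and pq :: "('l \<Rightarrow> nat) \<times> ('l \<Rightarrow> nat)"
  define s where "s = (\<lambda>n. SUP pq \<in> (tuples_S n :: ('l \<Rightarrow> nat) set) \<times> tuples_S n. T n pq)"
  have s_lim: "s \<longlonglongrightarrow> 0" using unif unfolding s_def T_def .
  have ratio01: "real k / real n \<in> {0..1}" if "n \<ge> 1" "k \<in> {1..n}" for n k :: nat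
    using that by (auto simp: divide_le_eq_1)
  define Q where "Q n = map_pmf (\<lambda>\<pi>. \<pi> \<circ> pn n) (P n)" for n
  define r where "r n q = real n ^ CARD('l) * pmf (Q n) q" for n and q :: "'l \<Rightarrow> nat"
  define Rp where "Rp n q = (\<Prod>a\<in>UNIV. \<rho> (real (pn n a) / real n) (real (q a) / real n))"
    for n and q :: "'l \<Rightarrow> nat"
  define Qs where "Qs n = {q :: 'l \<Rightarrow> nat. \<forall>a. q a \<in> {1..n}}" for n
  define vq where "vq n q = (\<chi> a. real (q a) / real n)" for n and q :: "'l \<Rightarrow> nat"

  have F_prob: "measure_pmf.prob (P n) {\<pi>. \<forall>a. \<pi> (pn n a) = q a} = pmf (Q n) q" for n q
  proof -
    have "(\<lambda>\<pi>. \<pi> \<circ> pn n) -` {q} = {\<pi>. \<forall>a. \<pi> (pn n a) = q a}" by (auto simp: fun_eq_iff)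
    thus ?thesis by (simp add: Q_def pmf_map)
  qed
  have F_finQs: "finite (Qs n)" for n
  proof -
    have "Qs n = PiE UNIV (\<lambda>_. {1..n})" by (auto simp: Qs_def PiE_UNIV_domain)
    thus ?thesis by (auto intro!: finite_PiE)
  qed
  have S_Qs: "tuples_S n \<subseteq> Qs n" for n unfolding tuples_S_def Qs_def by blast
  have fin_S: "finite (tuples_S n :: ('l \<Rightarrow> nat) set)" for n
    using S_Qs F_finQs finite_subset by blast

  obtain N where N: "\<And>n. n \<ge> N \<Longrightarrow> n \<ge> 1 \<and> pn n \<in> tuples_S n \<and> s n \<le> 1"
  proof -
    have "eventually (\<lambda>n. s n < 1) sequentially"
      using s_lim by (rule order_tendstoD) simp
    moreover have "eventually (\<lambda>n. n \<ge> (1::nat)) sequentially" by (rule eventually_ge_at_top)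
    ultimately have "eventually (\<lambda>n. n \<ge> 1 \<and> pn n \<in> tuples_S n \<and> s n \<le> 1) sequentially"
      using pn_S by eventually_elim auto
    thus ?thesis using that by (auto simp: eventually_sequentially)
  qed

  have F_supp: "q \<in> Qs n \<and> q \<in> tuples_S n" if n: "n \<ge> N" and q: "q \<in> set_pmf (Q n)" for n q
  proof -
    from N[OF n] have n1: "n \<ge> 1" and pS: "pn n \<in> tuples_S n" by auto
    from q obtain \<pi> where \<pi>: "\<pi> \<in> set_pmf (P n)" and qe: "q = \<pi> \<circ> pn n" by (auto simp: Q_def)
    have pp: "\<pi> permutes {1..n}" using perm[OF n1] \<pi> by auto
    have pr: "pn n a \<in> {1..n}" for a using pS unfolding tuples_S_def by blast
    have qr: "q a \<in> {1..n}" for a using permutes_in_image[OF pp] pr qe by simp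
    moreover have "inj q" using pS permutes_inj[OF pp] qe by (auto simp: tuples_S_def intro: inj_compose)
    ultimately show ?thesis by (auto simp: Qs_def tuples_S_def)
  qed
  have F_Rp: "0 < Rp n q \<and> Rp n q \<le> M ^ CARD('l)" if n: "n \<ge> N" and q: "q \<in> Qs n" for n q
  proof -
    from N[OF n] have n1: "n \<ge> 1" and pS: "pn n \<in> tuples_S n" by auto
    have pr: "pn n a \<in> {1..n}" for a using pS unfolding tuples_S_def by blast
    have a1: "real (pn n a) / real n \<in> {0..1}" for a using ratio01[OF n1 pr] .
    have qa: "q a \<in> {1..n}" for a using q by (simp add: Qs_def)
    have a2: "real (q a) / real n \<in> {0..1}" for a using ratio01[OF n1 qa] .
    have "0 < Rp n q" unfolding Rp_def using rpos a1 a2 by (intro prod_pos) auto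
    moreover have "Rp n q \<le> (\<Prod>a\<in>(UNIV::'l set). M)" unfolding Rp_def
      using rpos a1 a2 M by (intro prod_mono) (auto intro: less_imp_le)
    ultimately show ?thesis by simp
  qed
  have F_close: "\<bar>r n q - Rp n q\<bar> \<le> M ^ CARD('l) * s n" if n: "n \<ge> N" and q: "q \<in> tuples_S n" for n q
  proof -
    from N[OF n] have pS: "pn n \<in> tuples_S n" by auto
    have qQ: "q \<in> Qs n" using q S_Qs by auto
    have Rpos: "0 < Rp n q" and RM: "Rp n q \<le> M ^ CARD('l)" using F_Rp[OF n qQ] by auto
    have "T n (pn n, q) \<le> s n" unfolding s_def
      by (rule cSUP_upper) (use pS q in \<open>auto intro!: bdd_above_finite finite_imageI simp: fin_S\<close>)
    moreover have "T n (pn n, q) = \<bar>r n q / Rp n q - 1\<bar>" by (simp add: T_def r_def Rp_def F_prob)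
    ultimately have le: "\<bar>r n q / Rp n q - 1\<bar> \<le> s n" by simp
    hence s0: "0 \<le> s n" by linarith
    have "r n q - Rp n q = Rp n q * (r n q / Rp n q - 1)" using Rpos by (simp add: field_simps)
    hence "\<bar>r n q - Rp n q\<bar> = Rp n q * \<bar>r n q / Rp n q - 1\<bar>" using Rpos by (simp add: abs_mult)
    also have "\<dots> \<le> Rp n q * s n" using Rpos le by (intro mult_left_mono) auto
    also have "\<dots> \<le> M ^ CARD('l) * s n" using RM s0 by (intro mult_right_mono) auto
    finally show ?thesis .
  qed
  have F_rbound: "\<bar>r n q\<bar> \<le> 2 * M ^ CARD('l)" if n: "n \<ge> N" and q: "q \<in> Qs n" for n q
  proof (cases "q \<in> set_pmf (Q n)")
    case True
    hence qS: "q \<in> tuples_S n" using F_supp[OF n] by auto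
    have c: "\<bar>r n q - Rp n q\<bar> \<le> M ^ CARD('l) * s n" by (rule F_close[OF n qS])
    have "s n \<le> 1" using N[OF n] by auto
    hence ms: "M ^ CARD('l) * s n \<le> M ^ CARD('l)" using M0 mult_left_mono[of "s n" 1 "M ^ CARD('l)"] by simp
    have "Rp n q \<le> M ^ CARD('l)" using F_Rp[OF n q] by auto
    moreover have "0 \<le> r n q" by (simp add: r_def)
    ultimately show ?thesis using c ms by linarith
  next
    case False thus ?thesis using M0 by (simp add: r_def set_pmf_iff)
  qed
  have E_eq: "integral\<^sup>L (measure_pmf (map_pmf (\<lambda>\<pi>. \<chi> a. real (\<pi> (pn n a)) / real n) (P n))) f
      = (\<Sum>q\<in>Qs n. f (vq n q) * pmf (Q n) q)" if n: "n \<ge> N" for n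
  proof -
    have "map_pmf (\<lambda>\<pi>. \<chi> a. real (\<pi> (pn n a)) / real n) (P n) = map_pmf (vq n) (Q n)"
      by (simp add: Q_def map_pmf_comp vq_def o_def)
    hence "integral\<^sup>L (measure_pmf (map_pmf (\<lambda>\<pi>. \<chi> a. real (\<pi> (pn n a)) / real n) (P n))) f
        = integral\<^sup>L (measure_pmf (Q n)) (\<lambda>q. f (vq n q))" by simp
    also have "\<dots> = (\<Sum>q\<in>Qs n. f (vq n q) * pmf (Q n) q)"
      by (rule integral_measure_pmf_real) (use F_supp[OF n] F_finQs in auto)
    finally show ?thesis .
  qed

  define h where "h n y = (if n \<ge> N then \<Sum>q\<in>Qs n. (r n q * f (vq n q)) * indicator (cell n q) y else 0)"
    for n and y :: "real^'l"
  define D where "D = (\<lambda>y::real^'l. \<Prod>a\<in>UNIV. indicator {0..1} (y $ a) * \<rho> (x $ a) (y $ a))"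
  define g where "g y = D y * f y" for y
  define w where "w y = 2 * M ^ CARD('l) * B * indicator (cbox 0 1) y" for y :: "real^'l"

  have cell_fin: "emeasure lborel (cell n q) < \<infinity>" if "n \<ge> 1" "q \<in> Qs n" for n q
  proof -
    have "emeasure lborel (cell n q) \<le> emeasure lborel (cbox (0::real^'l) 1)"
      by (intro emeasure_mono cell_sub) (use that in \<open>auto simp: Qs_def\<close>)
    thus ?thesis using emeasure_lborel_cbox_finite[of "0::real^'l" 1] by (simp add: order.strict_trans1)
  qed
  have h_int: "integral\<^sup>L lborel (h n) = (\<Sum>q\<in>Qs n. f (vq n q) * pmf (Q n) q)" if n: "n \<ge> N" for n
  proof -
    from N[OF n] have n1: "n \<ge> 1" by auto
    have "integral\<^sup>L lborel (h n) = integral\<^sup>L lborel (\<lambda>y. \<Sum>q\<in>Qs n. (r n q * f (vq n q)) * indicator (cell n q) y)"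
      using n by (simp add: h_def[abs_def])
    also have "\<dots> = (\<Sum>q\<in>Qs n. integral\<^sup>L lborel (\<lambda>y. (r n q * f (vq n q)) * indicator (cell n q) y))"
      by (rule Bochner_Integration.integral_sum) (auto intro!: integrable_mult_right integrable_real_indicator cell_fin n1 cell_sets[simplified])
    also have "\<dots> = (\<Sum>q\<in>Qs n. r n q * f (vq n q) * (1 / real n ^ CARD('l)))"
      by (intro sum.cong) (auto simp: cell_measure[OF n1])
    also have "\<dots> = (\<Sum>q\<in>Qs n. f (vq n q) * pmf (Q n) q)"
      using n1 by (intro sum.cong) (auto simp: r_def)
    finally show ?thesis .
  qed
  have h_meas: "h n \<in> borel_measurable lborel" for n
  proof (cases "n \<ge> N")
    case True
    have "(\<lambda>y. \<Sum>q\<in>Qs n. (r n q * f (vq n q)) * indicator (cell n q) y) \<in> borel_measurable lborel"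
      by measurable
    thus ?thesis using True by (simp add: h_def[abs_def])
  next
    case False thus ?thesis by (simp add: h_def[abs_def])
  qed
  have f_meas: "f \<in> borel_measurable lborel"
    using borel_measurable_continuous_onI[OF fcont] by simp
  have fa: "(\<lambda>t. indicator {0..1} t *\<^sub>R \<rho> (x$a) t) \<in> borel_measurable borel" for a
  proof (rule borel_measurable_continuous_on_indicator)
    show "{0..1::real} \<in> sets borel" by simp
    have "continuous_on {0..1} (\<lambda>t. (\<lambda>(u,v). \<rho> u v) (x$a, t))"
      by (rule continuous_on_compose2[OF rcont]) (use x_box in \<open>auto intro!: continuous_intros\<close>)
    thus "continuous_on {0..1::real} (\<rho> (x$a))" by simp
  qed
  have D_meas: "D \<in> borel_measurable lborel"
  proof -
    have "(\<lambda>y::real^'l. (\<lambda>t. indicator {0..1} t *\<^sub>R \<rho> (x$a) t) (y$a)) \<in> borel_measurable lborel" for a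
      by (rule measurable_compose[OF _ fa])
         (simp add: borel_measurable_continuous_onI continuous_on_component continuous_on_id)
    hence "(\<lambda>y::real^'l. \<Prod>a\<in>UNIV. (\<lambda>t. indicator {0..1} t *\<^sub>R \<rho> (x$a) t) (y$a)) \<in> borel_measurable lborel"
      by (intro borel_measurable_prod)
    thus ?thesis by (simp add: D_def)
  qed
  have D_nn: "0 \<le> D y" for y
    unfolding D_def
  proof (intro prod_nonneg)
    fix a
    show "0 \<le> indicator {0..1} (y $ a) * \<rho> (x $ a) (y $ a)"
      using rpos[of "x$a" "y$a"] x_box by (auto simp: indicator_def)
  qed
  have target: "integral\<^sup>L (limit_law \<rho> x) f = integral\<^sup>L lborel g"
  proof -
    have "limit_law \<rho> x = density lborel (\<lambda>y. ennreal (D y))" by (simp add: limit_law_def D_def)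
    moreover have "AE y in lborel. 0 \<le> D y" by (simp add: D_nn)
    ultimately have "integral\<^sup>L (limit_law \<rho> x) f = integral\<^sup>L lborel (\<lambda>y. D y *\<^sub>R f y)"
      using integral_density[OF f_meas D_meas] by simp
    thus ?thesis by (simp add: g_def[abs_def])
  qed
  have w_int: "integrable lborel w"
  proof -
    have fin: "emeasure lborel (cbox (0::real^'l) 1) < \<infinity>" by (rule emeasure_lborel_cbox_finite)
    show ?thesis unfolding w_def[abs_def]
      by (intro integrable_mult_right integrable_real_indicator fin) simp
  qed
  have w0: "0 \<le> w y" for y using M0 B0 by (simp add: w_def)
  have bound: "norm (h n y) \<le> w y" for n y
  proof (cases "n \<ge> N")
    case False thus ?thesis using w0 by (simp add: h_def)
  next
    case nN: True
    from N[OF nN] have n1: "n \<ge> 1" by auto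
    show ?thesis
    proof (cases "\<exists>q\<in>Qs n. y \<in> cell n q")
      case True
      then obtain q where q: "q \<in> Qs n" "y \<in> cell n q" by blast
      have "h n y = r n q * f (vq n q)"
        using cell_sum[where G="\<lambda>q. r n q * f (vq n q)", OF n1 F_finQs q] nN by (simp add: h_def)
      moreover have "y \<in> cbox 0 1" using cell_sub[OF n1] q by (auto simp: Qs_def)
      moreover have "\<bar>r n q * f (vq n q)\<bar> \<le> 2 * M ^ CARD('l) * B"
        unfolding abs_mult using F_rbound[OF nN q(1)] B[of "vq n q"]
        by (intro mult_mono) auto
      ultimately show ?thesis by (simp add: w_def)
    next
      case False
      hence "h n y = 0"
        using cell_sum0[where G="\<lambda>q. r n q * f (vq n q)" and S="Qs n" and y=y and n=n] nN
        by (simp add: h_def)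
      thus ?thesis using w0 by simp
    qed
  qed
  have lim_good: "(\<lambda>n. h n y) \<longlonglongrightarrow> g y"
    if yb: "y \<in> box 0 1" and yd: "\<forall>a b. a \<noteq> b \<longrightarrow> y$a \<noteq> y$b" for y
  proof -
    have y01: "0 < y$a \<and> y$a < 1" for a using yb by (auto simp: mem_box_cart)
    define c where "c n = (\<lambda>a. nat \<lceil>real n * y$a\<rceil>)" for n :: nat
    have cre: "real (c n a) = real_of_int \<lceil>real n * y$a\<rceil>" for n a
    proof -
      have "0 \<le> real n * y$a" using y01[of a] by simp
      hence "0 \<le> \<lceil>real n * y$a\<rceil>" by linarith
      thus ?thesis by (simp add: c_def)
    qed
    have cc: "real n * y$a \<le> real (c n a) \<and> real (c n a) < real n * y$a + 1" for n a
      using ceiling_correct[of "real n * y$a"] cre[of n a] by linarith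
    have cbounds: "y$a \<le> real (c n a) / real n \<and> real (c n a) / real n \<le> y$a + 1 / real n"
      if n1: "n \<ge> 1" for n a
    proof -
      have np: "real n > 0" using n1 by simp
      have "y$a \<le> real (c n a) / real n" using cc[of n a] np by (simp add: field_simps)
      moreover have "real (c n a) / real n \<le> y$a + 1 / real n"
        using cc[of n a] np by (simp add: field_simps)
      ultimately show ?thesis by simp
    qed
    have ev1: "eventually (\<lambda>n. a \<noteq> b \<longrightarrow> c n a \<noteq> c n b) sequentially" for a b
    proof (cases "a = b")
      case True thus ?thesis by simp
    next
      case False
      define d where "d = \<bar>y$a - y$b\<bar>"
      have d: "d > 0" using yd False by (auto simp: d_def)
      obtain k :: nat where k: "real k > 1 / d" using reals_Archimedean2 by blast
      have "c n a \<noteq> c n b" if nk: "n \<ge> k" for n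
      proof
        assume eq: "c n a = c n b"
        have "real n \<ge> real k" using nk by simp
        hence "real n > 1 / d" using k by linarith
        hence gt: "real n * d > 1" using d by (simp add: field_simps)
        have "\<bar>real n * y$a - real n * y$b\<bar> < 1" using cc[of n a] cc[of n b] eq by auto
        moreover have "\<bar>real n * y$a - real n * y$b\<bar> = real n * d"
          by (simp add: d_def flip: right_diff_distrib abs_of_nonneg) (simp add: abs_mult)
        ultimately show False using gt by simp
      qed
      thus ?thesis unfolding eventually_sequentially by blast
    qed
    have ev_inj: "eventually (\<lambda>n. \<forall>a b. a \<noteq> b \<longrightarrow> c n a \<noteq> c n b) sequentially"
      by (intro eventually_all_finite ev1)
    have ev_good: "eventually (\<lambda>n. n \<ge> N \<and> c n \<in> tuples_S n \<and> h n y = r n (c n) * f (vq n (c n))) sequentially"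
      using ev_inj eventually_ge_at_top[of N]
    proof eventually_elim
      case (elim n)
      hence n: "n \<ge> N" and inj: "\<forall>a b. a \<noteq> b \<longrightarrow> c n a \<noteq> c n b" by auto
      from N[OF n] have n1: "n \<ge> 1" by auto
      have np: "real n > 0" using n1 by simp
      have crange: "c n a \<in> {1..n}" for a
      proof -
        have "0 < real n * y$a" "real n * y$a < real n" using y01[of a] np by auto
        hence "1 \<le> \<lceil>real n * y$a\<rceil>" "\<lceil>real n * y$a\<rceil> \<le> int n"
          using y01[of a] by (simp_all add: ceiling_le_iff less_imp_le)
        moreover have "\<And>m::int. 1 \<le> m \<Longrightarrow> m \<le> int n \<Longrightarrow> nat m \<in> {1..n}" by auto
        ultimately show ?thesis unfolding c_def by blast
      qed
      have cQ: "c n \<in> Qs n" using crange by (simp add: Qs_def)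
      have cS: "c n \<in> tuples_S n" using crange inj by (auto simp: tuples_S_def inj_def)
      have ycell: "y \<in> cell n (c n)"
        unfolding cell_def
      proof (intro CollectI allI conjI)
        fix a
        show "(real (c n a) - 1) / real n < y $ a" using cc[of n a] np by (simp add: field_simps)
        show "y $ a \<le> real (c n a) / real n" using cc[of n a] np by (simp add: field_simps)
      qed
      have "h n y = r n (c n) * f (vq n (c n))"
        using cell_sum[where G="\<lambda>q. r n q * f (vq n q)", OF n1 F_finQs cQ ycell] n by (simp add: h_def)
      then show ?case using n cS by auto
    qed
    have conv_vq: "(\<lambda>n. vq n (c n)) \<longlonglongrightarrow> y"
    proof (rule vec_tendstoI)
      fix a
      have "(\<lambda>n. real (c n a) / real n) \<longlonglongrightarrow> y$a"
      proof (rule tendsto_sandwich[where f="\<lambda>n. y$a" and h="\<lambda>n. y$a + 1 / real n"])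
        show "eventually (\<lambda>n. y$a \<le> real (c n a) / real n) sequentially"
          using eventually_ge_at_top[of "1::nat"] by eventually_elim (use cbounds in auto)
        show "eventually (\<lambda>n. real (c n a) / real n \<le> y$a + 1 / real n) sequentially"
          using eventually_ge_at_top[of "1::nat"] by eventually_elim (use cbounds in auto)
        show "(\<lambda>n. y$a) \<longlonglongrightarrow> y$a" by simp
        show "(\<lambda>n. y$a + 1 / real n) \<longlonglongrightarrow> y$a"
          using tendsto_add[OF tendsto_const[of "y$a"] lim_1_over_n] by simp
      qed
      thus "(\<lambda>n. vq n (c n) $ a) \<longlonglongrightarrow> y $ a" by (simp add: vq_def)
    qed
    have conv_f: "(\<lambda>n. f (vq n (c n))) \<longlonglongrightarrow> f y"
      by (rule continuous_on_tendsto_compose[OF fcont conv_vq]) auto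
    have conv_Rp: "(\<lambda>n. Rp n (c n)) \<longlonglongrightarrow> (\<Prod>a\<in>UNIV. \<rho> (x$a) (y$a))"
      unfolding Rp_def
    proof (rule tendsto_prod)
      fix a :: 'l
      have l1: "(\<lambda>n. real (pn n a) / real n) \<longlonglongrightarrow> x$a"
        using tendsto_vec_nth[OF pn_lim, of a] by simp
      have l2: "(\<lambda>n. real (c n a) / real n) \<longlonglongrightarrow> y$a"
        using tendsto_vec_nth[OF conv_vq, of a] by (simp add: vq_def)
      have lim2: "(\<lambda>n. (real (pn n a) / real n, real (c n a) / real n)) \<longlonglongrightarrow> (x$a, y$a)"
        by (rule tendsto_Pair[OF l1 l2])
      have ev2: "eventually (\<lambda>n. (real (pn n a) / real n, real (c n a) / real n) \<in> {0..1} \<times> {0..1}) sequentially"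
        using ev_good
      proof eventually_elim
        case (elim n)
        hence n: "n \<ge> N" and cS: "c n \<in> tuples_S n" by auto
        from N[OF n] have n1: "n \<ge> 1" and pS: "pn n \<in> tuples_S n" by auto
        have "pn n a \<in> {1..n}" using pS unfolding tuples_S_def by blast
        moreover have "c n a \<in> {1..n}" using cS unfolding tuples_S_def by blast
        ultimately show ?case using ratio01[OF n1] by auto
      qed
      have "(\<lambda>n. (\<lambda>(u,v). \<rho> u v) (real (pn n a) / real n, real (c n a) / real n)) \<longlonglongrightarrow> (\<lambda>(u,v). \<rho> u v) (x$a, y$a)"
        by (rule continuous_on_tendsto_compose[OF rcont lim2 _ ev2])
           (use x_box y01[of a] in auto)
      thus "(\<lambda>n. \<rho> (real (pn n a) / real n) (real (c n a) / real n)) \<longlonglongrightarrow> \<rho> (x$a) (y$a)" by simp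
    qed
    have conv_diff: "(\<lambda>n. r n (c n) - Rp n (c n)) \<longlonglongrightarrow> 0"
    proof (rule Lim_null_comparison)
      show "eventually (\<lambda>n. norm (r n (c n) - Rp n (c n)) \<le> M ^ CARD('l) * s n) sequentially"
        using ev_good by eventually_elim (use F_close in auto)
      show "(\<lambda>n. M ^ CARD('l) * s n) \<longlonglongrightarrow> 0"
        using tendsto_mult[OF tendsto_const[of "M ^ CARD('l)"] s_lim] by simp
    qed
    have conv_r: "(\<lambda>n. r n (c n)) \<longlonglongrightarrow> (\<Prod>a\<in>UNIV. \<rho> (x$a) (y$a))"
      using tendsto_add[OF conv_diff conv_Rp] by simp
    have "(\<lambda>n. r n (c n) * f (vq n (c n))) \<longlonglongrightarrow> (\<Prod>a\<in>UNIV. \<rho> (x$a) (y$a)) * f y"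
      by (rule tendsto_mult[OF conv_r conv_f])
    moreover have "eventually (\<lambda>n. r n (c n) * f (vq n (c n)) = h n y) sequentially"
      using ev_good by eventually_elim auto
    ultimately have "(\<lambda>n. h n y) \<longlonglongrightarrow> (\<Prod>a\<in>UNIV. \<rho> (x$a) (y$a)) * f y"
      by (rule Lim_transform_eventually)
    moreover have "D y = (\<Prod>a\<in>UNIV. \<rho> (x$a) (y$a))"
      unfolding D_def using y01 by (intro prod.cong) (auto simp: indicator_def less_imp_le)
    ultimately show ?thesis by (simp add: g_def)
  qed
  have lim_out: "(\<lambda>n. h n y) \<longlonglongrightarrow> g y" if yo: "y \<notin> cbox 0 1" for y
  proof -
    have "h n y = 0" for n
    proof (cases "n \<ge> N")
      case True
      from N[OF True] have n1: "n \<ge> 1" by auto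
      have "\<forall>q\<in>Qs n. y \<notin> cell n q" using cell_sub[OF n1] yo by (auto simp: Qs_def)
      thus ?thesis
        using True cell_sum0[where G="\<lambda>q. r n q * f (vq n q)" and S="Qs n" and y=y and n=n]
        by (simp add: h_def)
    qed (simp add: h_def)
    moreover have "g y = 0"
    proof -
      from yo obtain a where "y$a \<notin> {0..1}" by (auto simp: mem_box_cart)
      hence "indicator {0..1} (y $ a) * \<rho> (x $ a) (y $ a) = (0::real)" by simp
      hence "D y = 0" unfolding D_def by (intro prod_zero) auto
      thus ?thesis by (simp add: g_def)
    qed
    ultimately show ?thesis by simp
  qed
  have lim: "AE y in lborel. (\<lambda>n. h n y) \<longlonglongrightarrow> g y"
    using bad_AE
  proof eventually_elim
    case (elim y)
    show ?case
    proof (cases "y \<in> cbox 0 1")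
      case True
      with elim have "y \<in> box 0 1" "\<forall>a b. a \<noteq> b \<longrightarrow> y$a \<noteq> y$b" by auto
      thus ?thesis by (rule lim_good)
    next
      case False
      thus ?thesis by (rule lim_out)
    qed
  qed
  have g_meas: "g \<in> borel_measurable lborel"
    unfolding g_def[abs_def] using D_meas f_meas by measurable
  have "(\<lambda>n. integral\<^sup>L lborel (h n)) \<longlonglongrightarrow> integral\<^sup>L lborel g"
    by (rule integral_dominated_convergence[OF g_meas h_meas w_int lim]) (use bound in auto)
  hence "(\<lambda>n. integral\<^sup>L lborel (h n)) \<longlonglongrightarrow> integral\<^sup>L (limit_law \<rho> x) f"
    using target by simp
  moreover have "eventually (\<lambda>n. integral\<^sup>L lborel (h n) =
      integral\<^sup>L (measure_pmf (map_pmf (\<lambda>\<pi>. \<chi> a. real (\<pi> (pn n a)) / real n) (P n))) f) sequentially"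
    unfolding eventually_sequentially using h_int E_eq by (intro exI[of _ N]) auto
  ultimately show "(\<lambda>n. integral\<^sup>L (measure_pmf (map_pmf (\<lambda>\<pi>. \<chi> a. real (\<pi> (pn n a)) / real n) (P n))) f)
      \<longlonglongrightarrow> integral\<^sup>L (limit_law \<rho> x) f"
    by (rule Lim_transform_eventually)
qed

end
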